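(* Let $P$ be a poset and $\mathcal D$ a meet-specification of $P$ with radius $\omega$. Let $X$ be the set of all non-empty finitely generated $\mathcal D$-filters of $P$, ordered by reverse inclusion, and $e_X:P\to X$, $p\mapsto p^\uparrow$, the corresponding meet-extension. If $L$ is a lattice and $f:P\to L$ is a $\mathcal D$-morphism, then $f$ has enough meets for $e_X$, i.e. $\bigwedge f[e_X^{-1}(x^\uparrow)]$ exists in $L$ for every $x\in X$.
   Context: $p^\uparrow=\{q\ge p\}$; $e^{-1}(Z)=\{p:e(p)\in Z\}$. A meet-specification of $P$ is a set $\mathcal D$ of subsets of $P$ such that $\bigwedge S$ exists in $P$ for each $S\in\mathcal D$ and $\{p\}\in\mathcal D$ for all $p\in P$; radius $\omega$ means every member is finite. A $\mathcal D$-filter is an upset $F$ with $\bigwedge S\in F$ whenever $S\in\mathcal D$, $S\subseteq F$; it is finitely generated if it is the smallest $\mathcal D$-filter containing some finite set. An order-preserving map $f$ is a $\mathcal D$-morphism if $f(\bigwedge S)=\bigwedge f[S]$ for all $S\in\mathcal D$. *)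

theory Defs
  imports Main
begin

text \<open>A poset is modelled as a carrier set P inside an ordered type, with the induced order.\<close>

definition is_glb_in :: "'a::order set \<Rightarrow> 'a set \<Rightarrow> 'a \<Rightarrow> bool" where
  "is_glb_in A S m \<longleftrightarrow> m \<in> A \<and> (\<forall>s\<in>S. m \<le> s) \<and> (\<forall>y\<in>A. (\<forall>s\<in>S. y \<le> s) \<longrightarrow> y \<le> m)"

definition meet_in :: "'a::order set \<Rightarrow> 'a set \<Rightarrow> 'a" where
  "meet_in A S = (THE m. is_glb_in A S m)"

definition up_in :: "'a::order set \<Rightarrow> 'a \<Rightarrow> 'a set" where
  "up_in A p = {q \<in> A. p \<le> q}"

definition meet_spec :: "'a::order set \<Rightarrow> 'a set set \<Rightarrow> bool" where
  "meet_spec P D \<longleftrightarrow> (\<forall>S\<in>D. S \<subseteq> P \<and> (\<exists>m. is_glb_in P S m)) \<and> (\<forall>p\<in>P. {p} \<in> D)"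

definition radius_omega :: "'a set set \<Rightarrow> bool" where
  "radius_omega D \<longleftrightarrow> (\<forall>S\<in>D. finite S)"

definition D_filter :: "'a::order set \<Rightarrow> 'a set set \<Rightarrow> 'a set \<Rightarrow> bool" where
  "D_filter P D F \<longleftrightarrow> F \<subseteq> P \<and> (\<forall>p\<in>F. \<forall>q\<in>P. p \<le> q \<longrightarrow> q \<in> F)
     \<and> (\<forall>S\<in>D. S \<subseteq> F \<longrightarrow> meet_in P S \<in> F)"

definition D_filter_gen :: "'a::order set \<Rightarrow> 'a set set \<Rightarrow> 'a set \<Rightarrow> 'a set" where
  "D_filter_gen P D G = P \<inter> \<Inter>{F. D_filter P D F \<and> G \<subseteq> F}"

definition fg_D_filter :: "'a::order set \<Rightarrow> 'a set set \<Rightarrow> 'a set \<Rightarrow> bool" where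
  "fg_D_filter P D F \<longleftrightarrow> D_filter P D F \<and> (\<exists>G. finite G \<and> G \<subseteq> P \<and> F = D_filter_gen P D G)"

definition X_fg :: "'a::order set \<Rightarrow> 'a set set \<Rightarrow> 'a set set" where
  "X_fg P D = {F. fg_D_filter P D F \<and> F \<noteq> {}}"

text \<open>Principal up-set of x in X w.r.t. reverse inclusion: {y in X. x \<ge>_X y}, i.e. y \<subseteq> x.\<close>
definition X_up :: "'a::order set \<Rightarrow> 'a set set \<Rightarrow> 'a set \<Rightarrow> 'a set set" where
  "X_up P D x = {y \<in> X_fg P D. y \<subseteq> x}"

definition e_X :: "'a::order set \<Rightarrow> 'a \<Rightarrow> 'a set" where
  "e_X P p = up_in P p"

definition is_glb :: "'b::order set \<Rightarrow> 'b \<Rightarrow> bool" where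
  "is_glb S m \<longleftrightarrow> (\<forall>s\<in>S. m \<le> s) \<and> (\<forall>y. (\<forall>s\<in>S. y \<le> s) \<longrightarrow> y \<le> m)"

definition D_morphism :: "'a::order set \<Rightarrow> 'a set set \<Rightarrow> ('a \<Rightarrow> 'b::order) \<Rightarrow> bool" where
  "D_morphism P D f \<longleftrightarrow> (\<forall>p\<in>P. \<forall>q\<in>P. p \<le> q \<longrightarrow> f p \<le> f q)
     \<and> (\<forall>S\<in>D. is_glb (f ` S) (f (meet_in P S)))"

end

theory Submission
  imports Defs
begin

lemma meet_in_glb:
  assumes "is_glb_in P S m"
  shows "is_glb_in P S (meet_in P S)"
proof -
  have "\<And>m'. is_glb_in P S m' \<Longrightarrow> m' = m"
    using assms unfolding is_glb_in_def by (meson order.antisym)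
  then show ?thesis unfolding meet_in_def using assms by (metis theI)
qed

lemma lb_filter:
  fixes f :: "'a::order \<Rightarrow> 'b::order"
  assumes ms: "meet_spec P D" and mor: "D_morphism P D f"
    and G: "G \<subseteq> P" and c: "\<forall>g\<in>G. c \<le> f g"
  shows "\<forall>y\<in>D_filter_gen P D G. c \<le> f y"
proof -
  let ?F = "{y\<in>P. c \<le> f y}"
  have "D_filter P D ?F"
    unfolding D_filter_def
  proof (intro conjI ballI impI)
    show "?F \<subseteq> P" by auto
  next
    fix p q assume "p \<in> ?F" "q \<in> P" "p \<le> q"
    then show "q \<in> ?F" using mor unfolding D_morphism_def by (auto intro: order.trans)
  next
    fix S assume S: "S \<in> D" "S \<subseteq> ?F"
    then obtain m where "is_glb_in P S m" using ms unfolding meet_spec_def by blast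
    then have "meet_in P S \<in> P" using meet_in_glb unfolding is_glb_in_def by blast
    moreover have "is_glb (f ` S) (f (meet_in P S))" using mor S unfolding D_morphism_def by blast
    then have "c \<le> f (meet_in P S)" using S unfolding is_glb_def by blast
    ultimately show "meet_in P S \<in> ?F" by blast
  qed
  moreover have "G \<subseteq> ?F" using G c by auto
  ultimately show ?thesis unfolding D_filter_gen_def by blast
qed

theorem lemma9p4:
  fixes P :: "'a::order set" and D :: "'a set set" and f :: "'a \<Rightarrow> 'b::lattice"
  assumes "meet_spec P D" and "radius_omega D"
    and "D_morphism P D f"
    and "x \<in> X_fg P D"
  shows "\<exists>m. is_glb (f ` {p \<in> P. e_X P p \<in> X_up P D x}) m"
proof -
  have xf: "D_filter P D x" and xne: "x \<noteq> {}" using assms(4) unfolding X_fg_def fg_D_filter_def by auto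
  obtain G where G: "finite G" "G \<subseteq> P" "x = D_filter_gen P D G"
    using assms(4) unfolding X_fg_def fg_D_filter_def by auto
  have xP: "x \<subseteq> P" using xf unfolding D_filter_def by auto
  have Gx: "G \<subseteq> x" using G unfolding D_filter_gen_def by auto
  have upfil: "up_in P p \<in> X_fg P D" if p: "p \<in> P" for p
  proof -
    have filt: "D_filter P D (up_in P p)"
      unfolding D_filter_def up_in_def
    proof (intro conjI ballI impI)
      fix S assume S: "S \<in> D" "S \<subseteq> {q \<in> P. p \<le> q}"
      then obtain m where "is_glb_in P S m" using assms(1) unfolding meet_spec_def by blast
      then have "is_glb_in P S (meet_in P S)" by (rule meet_in_glb)
      then show "meet_in P S \<in> {q \<in> P. p \<le> q}" using S p unfolding is_glb_in_def by auto
    qed (auto intro: order.trans)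
    have "up_in P p = D_filter_gen P D {p}"
    proof
      show "up_in P p \<subseteq> D_filter_gen P D {p}"
      proof
        fix q assume q: "q \<in> up_in P p"
        have "q \<in> F" if "D_filter P D F" "{p} \<subseteq> F" for F
          using that q unfolding D_filter_def up_in_def by auto
        then show "q \<in> D_filter_gen P D {p}" using q unfolding D_filter_gen_def up_in_def by auto
      qed
    next
      show "D_filter_gen P D {p} \<subseteq> up_in P p"
        using filt p unfolding D_filter_gen_def up_in_def by auto
    qed
    moreover have "up_in P p \<noteq> {}" using p unfolding up_in_def by auto
    ultimately show ?thesis using filt p unfolding X_fg_def fg_D_filter_def by blast
  qed
  have seteq: "{p \<in> P. e_X P p \<in> X_up P D x} = x"
  proof
    show "{p \<in> P. e_X P p \<in> X_up P D x} \<subseteq> x"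
      unfolding e_X_def X_up_def up_in_def by auto
  next
    show "x \<subseteq> {p \<in> P. e_X P p \<in> X_up P D x}"
    proof
      fix p assume p: "p \<in> x"
      then have pP: "p \<in> P" using xP by auto
      have "up_in P p \<subseteq> x" using xf p unfolding D_filter_def up_in_def by auto
      then show "p \<in> {p \<in> P. e_X P p \<in> X_up P D x}"
        using upfil[OF pP] pP unfolding e_X_def X_up_def by auto
    qed
  qed
  show ?thesis
  proof (cases "G = {}")
    case True
    obtain p where p: "p \<in> x" using xne by auto
    have "\<forall>y\<in>x. f p \<le> f y" using lb_filter[OF assms(1) assms(3), of "{}" "f p"] G True by auto
    then have "is_glb (f ` x) (f p)" using p unfolding is_glb_def by auto
    then show ?thesis using seteq by auto
  next
    case False
    let ?m = "Inf_fin (f ` G)"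
    have "\<forall>g\<in>G. ?m \<le> f g" using G(1) by (auto intro: Inf_fin.coboundedI)
    then have "\<forall>y\<in>x. ?m \<le> f y" using lb_filter[OF assms(1) assms(3) G(2)] G(3) by auto
    moreover have "\<forall>y. (\<forall>s\<in>f ` x. y \<le> s) \<longrightarrow> y \<le> ?m"
    proof (intro allI impI)
      fix y assume "\<forall>s\<in>f ` x. y \<le> s"
      then have "\<forall>s\<in>f ` G. y \<le> s" using Gx by auto
      then show "y \<le> ?m" using G(1) False by (simp add: Inf_fin.bounded_iff)
    qed
    ultimately have "is_glb (f ` x) ?m" unfolding is_glb_def by auto
    then show ?thesis using seteq by auto
  qed
qed

end
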